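(* Let $\textsc{All}$ denote the set of all languages $L \subseteq \{0,1\}^*$. Then $\mathrm{T}_s(\mathbb{Q}) = \textsc{All}$; that is, for every language $L \subseteq \{0,1\}^*$ there exists a transformer over the rational datatype $\mathbb{Q}$ with (strong) saturated attention, size-preserving embedding function and size-preserving activation functions, which recognizes $L$.
   Context: Datatypes. All values are binary strings. An integer is encoded as a sign bit followed by binary magnitude bits; an unsigned integer omits the sign bit. A rational $r \in \mathbb{Q}$ is encoded as a sign bit $s$ together with a pair $\langle p,q\rangle$ of unsigned integers (padded to equal length and interleaved), representing $(2s-1)p/q$; addition and multiplication are the usual ones followed by reduction to lowest terms ($p,q$ divided by $\gcd(p,q)$). The size $|x|$ of a value $x$ is its length in bits. A function $f:\{0,1\}^*\to\{0,1\}^*$ is size-preserving if there are constants $c,N$ such that $|f(x)| \le c|x|$ for all $x$ with $|x|\ge N$; $\mathcal S$ denotes the set of size-preserving functions (applied to numbers/vectors via their binary encodings; an input pair $(\sigma,i)\in\Sigma\times\mathbb N$ is likewise viewed as a bitstring). Saturated attention. For a score vector $a\in\mathbb D^n$ let $\mathcal M(a)=\{i : a_i=\max_j a_j\}$ and $s(a)_j = 1/|\mathcal M(a)|$ if $j\in\mathcal M(a)$ and $0$ otherwise. Transformer. Over datatype $\mathbb D$ with finite alphabet $\Sigma$, model dimension $k$, $L$ layers and $H$ heads per layer, a transformer consists of an embedding function $\phi:\Sigma\times\mathbb N\to\mathbb D^k$ in $\mathcal S$, scoring functions $s_{\ell,h}:\mathbb D^k\times\mathbb D^k\to\mathbb D$,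 and activation functions $f_\ell$ in $\mathcal S$. On input $w\in\Sigma^n$: $v_{0,i}=\phi(w_i,i)$; $a_{\ell,h,i,j}=s_{\ell,h}(v_{\ell,i},v_{\ell,j})$; the head output is $b_{\ell+1,h,i}=\sum_{j=1}^n \alpha(a_{\ell,h,i,\cdot})_j\, v_{\ell,j}$ with $\alpha$ the attention function and all arithmetic in $\mathbb D$; and $v_{\ell+1,i}=f_{\ell+1}(v_{\ell,i}, b_{\ell+1,1,i},\dots,b_{\ell+1,H,i})$. The transformer recognizes $L\subseteq\Sigma^*$ if there is a rational affine map $W,b$ with $W\cdot v_{L,1}(w)+b>0 \iff w\in L$ for all $w\in\Sigma^*$. $\mathrm T_\alpha(\mathbb D)$ is the class of languages recognized by some such transformer with attention function $\alpha$, datatype $\mathbb D$, some $k$, and embedding and activation functions in $\mathcal S$. *)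

theory Defs
  imports Complex_Main
begin

fun nat_bits :: "nat \<Rightarrow> bool list" where
  "nat_bits n = (if n = 0 then [] else nat_bits (n div 2) @ [odd n])"

declare nat_bits.simps[simp del]

definition pad_to :: "nat \<Rightarrow> bool list \<Rightarrow> bool list" where
  "pad_to m xs = replicate (m - length xs) False @ xs"

fun interleave :: "bool list \<Rightarrow> bool list \<Rightarrow> bool list" where
  "interleave (x # xs) (y # ys) = x # y # interleave xs ys"
| "interleave _ _ = []"

text \<open>Rational r = (2s-1) p/q in lowest terms (q > 0): sign bit s (True = nonnegative),
  followed by p and q padded to equal length and interleaved.\<close>
definition enc_rat :: "rat \<Rightarrow> bool list" where
  "enc_rat r = (let (p, q) = quotient_of r;
                    bp = nat_bits (nat \<bar>p\<bar>); bq = nat_bits (nat q);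
                    m = max (length bp) (length bq)
                in (0 \<le> p) # interleave (pad_to m bp) (pad_to m bq))"

text \<open>Self-delimiting encoding of a finite sequence of bitstrings
  (each bit doubled, each item terminated by 01).\<close>
definition enc_seq :: "bool list list \<Rightarrow> bool list" where
  "enc_seq ws = concat (map (\<lambda>w. concat (map (\<lambda>b. [b, b]) w) @ [False, True]) ws)"

definition enc_vec :: "rat list \<Rightarrow> bool list" where
  "enc_vec v = enc_seq (map enc_rat v)"

definition enc_sym_pos :: "bool \<times> nat \<Rightarrow> bool list" where
  "enc_sym_pos x = fst x # nat_bits (snd x)"

definition enc_act_in :: "rat list \<times> rat list list \<Rightarrow> bool list" where
  "enc_act_in x = enc_seq (map enc_vec (fst x # snd x))"

definition size_preserving :: "('a \<Rightarrow> bool list) \<Rightarrow> ('b \<Rightarrow> bool list) \<Rightarrow> ('a \<Rightarrow> 'b) \<Rightarrow> bool" where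
  "size_preserving ein eout g \<longleftrightarrow>
     (\<exists>c N::nat. \<forall>x. length (ein x) \<ge> N \<longrightarrow> length (eout (g x)) \<le> c * length (ein x))"

definition vscale :: "rat \<Rightarrow> rat list \<Rightarrow> rat list" where
  "vscale c v = map (\<lambda>x. c * x) v"

definition vadd :: "rat list \<Rightarrow> rat list \<Rightarrow> rat list" where
  "vadd u v = map2 (+) u v"

definition dotp :: "rat list \<Rightarrow> rat list \<Rightarrow> rat" where
  "dotp u v = sum_list (map2 (*) u v)"

definition saturated :: "rat list \<Rightarrow> rat list" where
  "saturated a = (let m = Max (set a); c = length (filter (\<lambda>y. y = m) a)
                  in map (\<lambda>x. if x = m then 1 / of_nat c else 0) a)"

text \<open>Layers are 0..L-1 for scores (score l h uses v_l) and activation (act (l+1)) produces v_{l+1};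
  heads are 0..H-1; positions are 1-based in the embedding.\<close>
record transformer =
  dim :: nat
  nlayers :: nat
  nheads :: nat
  emb :: "bool \<Rightarrow> nat \<Rightarrow> rat list"
  score :: "nat \<Rightarrow> nat \<Rightarrow> rat list \<Rightarrow> rat list \<Rightarrow> rat"
  act :: "nat \<Rightarrow> rat list \<Rightarrow> rat list list \<Rightarrow> rat list"

definition head_out :: "transformer \<Rightarrow> nat \<Rightarrow> nat \<Rightarrow> rat list list \<Rightarrow> nat \<Rightarrow> rat list" where
  "head_out T l h vs i =
     (let n = length vs;
          a = map (\<lambda>j. score T l h (vs ! i) (vs ! j)) [0..<n];
          w = saturated a
      in foldl (\<lambda>acc j. vadd acc (vscale (w ! j) (vs ! j))) (replicate (dim T) 0) [0..<n])"

definition layer :: "transformer \<Rightarrow> nat \<Rightarrow> rat list list \<Rightarrow> rat list list" where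
  "layer T l vs = map (\<lambda>i. act T (Suc l) (vs ! i) (map (\<lambda>h. head_out T l h vs i) [0..<nheads T]))
                      [0..<length vs]"

definition run :: "transformer \<Rightarrow> bool list \<Rightarrow> rat list list" where
  "run T w = foldl (\<lambda>vs l. layer T l vs)
                   (map (\<lambda>i. emb T (w ! i) (Suc i)) [0..<length w]) [0..<nlayers T]"

text \<open>v_{L,1}; for the empty word (no positions) we use the zero vector by convention.\<close>
definition final_vec :: "transformer \<Rightarrow> bool list \<Rightarrow> rat list" where
  "final_vec T w = (if w = [] then replicate (dim T) 0 else hd (run T w))"

definition admissible :: "transformer \<Rightarrow> bool" where
  "admissible T \<longleftrightarrow>
     (\<forall>\<sigma> i. length (emb T \<sigma> i) = dim T) \<and>
     (\<forall>l\<in>{1..nlayers T}. \<forall>v bs. length (act T l v bs) = dim T) \<and>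
     size_preserving enc_sym_pos enc_vec (\<lambda>x. emb T (fst x) (snd x)) \<and>
     (\<forall>l\<in>{1..nlayers T}. size_preserving enc_act_in enc_vec (\<lambda>x. act T l (fst x) (snd x)))"

definition recognizes :: "transformer \<Rightarrow> bool list set \<Rightarrow> bool" where
  "recognizes T L \<longleftrightarrow>
     (\<exists>W (b::rat). length W = dim T \<and> (\<forall>w. dotp W (final_vec T w) + b > 0 \<longleftrightarrow> w \<in> L))"

end

theory Submission
  imports Defs "HOL-Computational_Algebra.Primes" "HOL-Library.Infinite_Set"
begin


lemma nair_sum:
  assumes "m \<ge> 1"
  shows "(\<Sum>k\<le>r. (-1)^k * of_nat (r choose k) / of_nat (m+k) :: rat) = fact (m-1) * fact r / fact (m+r)"
  using assms
proof (induction r arbitrary: m)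
  case 0
  then show ?case by (cases m) (simp_all add: fact_Suc del: of_nat_Suc)
next
  case (Suc r)
  define g where "g m k = (-1)^k * of_nat (r choose k) / (of_nat (m+k) :: rat)" for m k
  have split: "(\<Sum>k\<le>Suc r. (-1)^k * of_nat (Suc r choose k) / of_nat (m+k) :: rat)
      = 1 / of_nat m - (\<Sum>k\<le>r. g (Suc m) k) + (\<Sum>k\<le>r. g m (Suc k))"
  proof -
    have "(\<Sum>k\<le>r. (-1)^Suc k * of_nat (Suc r choose Suc k) / of_nat (m+Suc k) :: rat)
       = (\<Sum>k\<le>r. g m (Suc k) - g (Suc m) k)"
      by (rule sum.cong) (simp_all add: g_def binomial_Suc_Suc field_simps add_pos_nonneg del: of_nat_Suc)
    then show ?thesis
      by (subst sum.atMost_Suc_shift) (simp add: sum_subtractf)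
  qed
  have sh: "(\<Sum>k\<le>r. g m (Suc k)) = (\<Sum>k\<le>r. g m k) - 1 / of_nat m"
  proof -
    have "(\<Sum>k\<le>Suc r. g m k) = g m 0 + (\<Sum>k\<le>r. g m (Suc k))" by (rule sum.atMost_Suc_shift)
    moreover have "(\<Sum>k\<le>Suc r. g m k) = (\<Sum>k\<le>r. g m k)" by (simp add: g_def)
    ultimately show ?thesis by (simp add: g_def)
  qed
  have ih1: "(\<Sum>k\<le>r. g m k) = fact (m-1) * fact r / fact (m+r)" using Suc by (simp add: g_def)
  have ih2: "(\<Sum>k\<le>r. g (Suc m) k) = fact m * fact r / fact (Suc m+r)" using Suc.IH[of "Suc m"] by (simp add: g_def)
  obtain m' where m': "m = Suc m'" using Suc.prems by (cases m) auto
  have "(\<Sum>k\<le>Suc r. (-1)^k * of_nat (Suc r choose k) / of_nat (m+k) :: rat)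
      = fact (m-1) * fact r / fact (m+r) - fact m * fact r / fact (Suc m+r)"
    using split sh ih1 ih2 by simp
  also have "\<dots> = fact (m-1) * fact (Suc r) / fact (m + Suc r)"
  proof -
    have F: "(fact (m'+r)::rat) > 0" by simp
    have A: "(1 + (of_nat m' + of_nat r)::rat) > 0" "(2 + (of_nat m' + of_nat r)::rat) > 0" by (simp_all add: add_pos_nonneg)
    show ?thesis unfolding m' using F A by (simp add: fact_Suc divide_simps del: of_nat_Suc) (simp add: algebra_simps)
  qed
  finally show ?case .
qed

lemma nair_dvd:
  fixes M :: nat
  assumes m: "m \<ge> 1" and dv: "\<And>k. m \<le> k \<Longrightarrow> k \<le> m + r \<Longrightarrow> k dvd M"
  shows "m * (m + r choose m) dvd M"
proof -
  define C where "C = m + r choose m"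
  have fC: "fact m * fact r * C = (fact (m+r) :: nat)"
    using binomial_fact_lemma[of m "m+r"] by (simp add: C_def)
  have fm: "fact m = m * (fact (m-1) :: nat)" using m by (cases m) auto
  have C0: "C > 0" by (simp add: C_def)
  have key: "(fact (m-1) * fact r / fact (m+r) :: rat) = 1 / (of_nat m * of_nat C)"
  proof -
    have "(fact (m+r) :: rat) = of_nat m * of_nat C * (fact (m-1) * fact r)"
      using arg_cong[OF fC, of "of_nat :: nat \<Rightarrow> rat"] fm by (simp add: of_nat_mult algebra_simps)
    then show ?thesis using m C0 by (simp add: field_simps)
  qed
  define z where "z = (\<Sum>k\<le>r. (-1)^k * int (r choose k) * int (M div (m+k)))"
  have "(of_int z :: rat) = (\<Sum>k\<le>r. of_nat M * ((-1)^k * of_nat (r choose k) / of_nat (m+k)))"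
    unfolding z_def of_int_sum
  proof (rule sum.cong)
    fix k assume "k \<in> {..r}"
    then have "(m+k) dvd M" using dv[of "m+k"] by simp
    then obtain q where q: "M = (m+k) * q" by blast
    have "(of_nat (m + k) :: rat) \<noteq> 0" using m by (simp del: of_nat_add)
    then have "(of_nat (M div (m+k)) :: rat) = of_nat M / of_nat (m+k)"
      using m by (simp add: q del: of_nat_add)
    then show "(of_int ((-1)^k * int (r choose k) * int (M div (m+k))) :: rat)
       = of_nat M * ((-1)^k * of_nat (r choose k) / of_nat (m+k))"
      by simp
  qed simp
  also have "\<dots> = of_nat M * (\<Sum>k\<le>r. (-1)^k * of_nat (r choose k) / of_nat (m+k))"
    by (rule sum_distrib_left[symmetric])
  also have "\<dots> = of_nat M / (of_nat m * of_nat C)"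
    unfolding nair_sum[OF m, of r] key by simp
  finally have "(of_nat M :: rat) = of_int z * (of_nat m * of_nat C)"
    using m C0 by (simp add: field_simps)
  then have "int M = z * int (m * C)"
    by (metis of_int_eq_iff of_int_mult of_int_of_nat_eq of_nat_mult)
  then have "int (m * C) dvd int M" by simp
  then have "m * C dvd M" by (simp only: of_nat_dvd_iff)
  then show ?thesis by (simp add: C_def)
qed


definition primes_upto :: "nat \<Rightarrow> nat set" where
  "primes_upto N = {p. prime p \<and> p \<le> N}"

definition expo :: "nat \<Rightarrow> nat \<Rightarrow> nat" where
  "expo N p = Max ((\<lambda>k. multiplicity p k) ` {1..N})"

definition QQ :: "nat \<Rightarrow> nat" where
  "QQ N = (\<Prod>p\<in>primes_upto N. p ^ expo N p)"

lemma finite_primes_upto [simp]: "finite (primes_upto N)"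
  unfolding primes_upto_def by auto

lemma QQ_pos: "QQ N > 0"
  unfolding QQ_def primes_upto_def by (auto intro!: prod_pos simp: prime_gt_0_nat)

lemma dvd_QQ:
  assumes "1 \<le> k" "k \<le> N"
  shows "k dvd QQ N"
proof (rule multiplicity_le_imp_dvd)
  show "k \<noteq> 0" using assms by simp
  fix p :: nat assume p: "prime p"
  show "multiplicity p k \<le> multiplicity p (QQ N)"
  proof (cases "p \<le> N")
    case True
    have "multiplicity p (QQ N) = expo N p"
      unfolding QQ_def using True p
      by (subst multiplicity_prod_prime_powers) (auto simp: primes_upto_def)
    moreover have "multiplicity p k \<le> expo N p"
      unfolding expo_def using assms by (intro Max_ge) auto
    ultimately show ?thesis by simp
  next
    case False
    then have "\<not> p dvd k" using assms by (auto dest: dvd_imp_le)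
    then show ?thesis by (simp add: not_dvd_imp_multiplicity_0)
  qed
qed

lemma QQ_le:
  assumes "N \<ge> 1"
  shows "QQ N \<le> N ^ card (primes_upto N)"
proof -
  have "p ^ expo N p \<le> N" if p: "p \<in> primes_upto N" for p
  proof -
    have "expo N p \<in> (\<lambda>k. multiplicity p k) ` {1..N}"
      unfolding expo_def using assms by (intro Max_in) auto
    then obtain k where k: "k \<in> {1..N}" "expo N p = multiplicity p k" by auto
    have "p ^ multiplicity p k dvd k" by (rule multiplicity_dvd)
    then have "p ^ multiplicity p k \<le> k" using k by (intro dvd_imp_le) auto
    then show ?thesis using k by simp
  qed
  then have "QQ N \<le> (\<Prod>p\<in>primes_upto N. N)"
    unfolding QQ_def by (intro prod_mono) auto
  then show ?thesis by simp
qed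

lemma four_pow_bound:
  assumes m: "m \<ge> 1"
  shows "4 ^ m \<le> 2 * (2*m) ^ card (primes_upto (2*m))"
proof -
  have "m * (m + m choose m) dvd QQ (2*m)"
    by (rule nair_dvd[OF m]) (use m in \<open>auto intro!: dvd_QQ\<close>)
  then have "m * (2*m choose m) \<le> QQ (2*m)"
    using QQ_pos by (intro dvd_imp_le) (auto simp: mult_2)
  also have "\<dots> \<le> (2*m) ^ card (primes_upto (2*m))" using QQ_le[of "2*m"] m by (simp del: power_mult_distrib)
  finally have A: "m * (2*m choose m) \<le> (2*m) ^ card (primes_upto (2*m))" .
  have "4^m / (2*real m) \<le> real (2*m choose m)"
    using central_binomial_lower_bound m by simp
  then have "4^m \<le> 2 * real m * real (2*m choose m)"
    using m by (simp add: field_simps)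
  also have "\<dots> \<le> 2 * real ((2*m) ^ card (primes_upto (2*m)))"
    using A by (simp flip: of_nat_mult)
  finally have "real (4^m) \<le> real (2 * (2*m) ^ card (primes_upto (2*m)))" by simp
  then show ?thesis by (simp only: of_nat_le_iff)
qed


lemma pow_lin: "2*b+1 \<le> (2::nat)^(b+1)"
proof (induction b)
  case (Suc b)
  have "1 \<le> (2::nat)^b" by simp
  moreover have "2*Suc b+1 = (2*b+1)+2" "(2::nat)^(Suc b+1) = 2*2^(b+1)" by simp_all
  moreover have "(2::nat)^(b+1) = 2 * 2^b" by simp
  ultimately show ?case using Suc by linarith
qed simp

lemma aux_exp:
  assumes "(4::nat)^M \<le> 2*(2^K)^c" "2*M = 2^K"
  shows "2*M \<le> 1 + K*c"
proof -
  have "(4::nat)^M = 2^(2*M)" by (simp add: power_mult)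
  moreover have "(2::nat)*(2^K)^c = 2^(1+K*c)" by (simp add: power_mult)
  ultimately have "(2::nat)^(2*M) \<le> 2^(1+K*c)" using assms(1) by simp
  then show ?thesis by (rule power_le_imp_le_exp[rotated]) simp
qed

lemma card_primes_big:
  assumes j: "j < 2^b"
  shows "j < card (primes_upto (2^(2*b+1)))"
proof (rule ccontr)
  define c where "c = card (primes_upto (2^(2*b+1)))"
  assume "\<not> j < card (primes_upto (2^(2*b+1)))"
  then have cj: "c \<le> j" by (simp add: c_def)
  have m: "(4::nat)^b \<ge> 1" by simp
  have e: "2 * 4^b = (2::nat)^(2*b+1)" by (simp add: power_mult power_add)
  have A: "2 * 4^b \<le> 1 + (2*b+1)*c"
    by (rule aux_exp[OF four_pow_bound[OF m, unfolded e, folded c_def] e])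
  have "c + 1 \<le> 2^b" using cj j by simp
  then have "(2*b+1)*(c+1) \<le> (2*b+1) * 2^b" by (rule mult_left_mono) simp
  also have "\<dots> \<le> 2^(b+1) * 2^b" using pow_lin[of b] by (intro mult_right_mono) auto
  also have "\<dots> = 2 * 4^b" by (simp add: power_add power_mult_distrib[symmetric] mult.commute)
  finally have B: "(2*b+1)*c + (2*b+1) \<le> 2 * 4^b" by (simp add: algebra_simps)
  from A B have "b = 0" by linarith
  then show False using A cj j by simp
qed

definition pr :: "nat \<Rightarrow> nat" where
  "pr j = enumerate {p. prime p} j"

lemma inf_primes: "infinite {p::nat. prime p}" by (rule primes_infinite)

lemma pr_prime: "prime (pr j)"
  unfolding pr_def using enumerate_in_set[OF inf_primes] by blast

lemma pr_inj: "pr i = pr j \<Longrightarrow> i = j"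
  unfolding pr_def using inf_primes by (metis enumerate_mono_le_iff le_antisym order_refl)

lemma pr_le:
  assumes "j < card (primes_upto N)"
  shows "pr j \<le> N"
proof (rule ccontr)
  assume "\<not> pr j \<le> N"
  then have N: "N < pr j" by simp
  have "primes_upto N \<subseteq> pr ` {..<j}"
  proof
    fix p assume p: "p \<in> primes_upto N"
    then obtain k where k: "enumerate {p. prime p} k = p"
      using enumerate_Ex[OF inf_primes] by (auto simp: primes_upto_def)
    have "k < j"
    proof (rule ccontr)
      assume "\<not> k < j"
      then have "pr j \<le> pr k" unfolding pr_def using inf_primes by simp
      then show False using k N p by (simp add: pr_def primes_upto_def)
    qed
    then show "p \<in> pr ` {..<j}" using k by (auto simp: pr_def)
  qed
  then have "card (primes_upto N) \<le> card (pr ` {..<j})" by (intro card_mono) auto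
  also have "\<dots> \<le> j" using card_image_le[of "{..<j}" pr] by simp
  finally show False using assms by simp
qed

lemma pr_bound:
  assumes "j < 2^b"
  shows "pr j < 2^(2*b+2)"
proof -
  have "pr j \<le> 2^(2*b+1)" by (rule pr_le[OF card_primes_big[OF assms]])
  also have "\<dots> < 2^(2*b+2)" by simp
  finally show ?thesis .
qed


lemma nat_bits_less: "n < 2 ^ length (nat_bits n)"
proof (induction n rule: nat_bits.induct)
  case (1 n)
  show ?case
  proof (cases "n = 0")
    case True then show ?thesis by (simp add: nat_bits.simps)
  next
    case False
    then have "nat_bits n = nat_bits (n div 2) @ [odd n]" by (simp add: nat_bits.simps)
    then show ?thesis using 1 False by simp
  qed
qed

lemma nat_bits_le: "n < 2 ^ k \<Longrightarrow> length (nat_bits n) \<le> k"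
proof (induction n arbitrary: k rule: nat_bits.induct)
  case (1 n)
  show ?case
  proof (cases "n = 0")
    case True then show ?thesis by (simp add: nat_bits.simps)
  next
    case False
    then have eq: "nat_bits n = nat_bits (n div 2) @ [odd n]" by (simp add: nat_bits.simps)
    obtain k' where k: "k = Suc k'" using 1(2) False by (cases k) auto
    have "n div 2 < 2 ^ k'" using 1(2) k by simp
    then have "length (nat_bits (n div 2)) \<le> k'" using 1(1) False by simp
    then show ?thesis using eq k by simp
  qed
qed

lemma nat_bits_0 [simp]: "nat_bits 0 = []" by (simp add: nat_bits.simps)
lemma nat_bits_1 [simp]: "nat_bits 1 = [True]" by (simp add: nat_bits.simps)
lemma nat_bits_Suc0 [simp]: "nat_bits (Suc 0) = [True]" by (simp add: nat_bits.simps)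
lemma len_doubled: "length (concat (map (\<lambda>b. [b, b]) w)) = 2 * length w"
  by (induction w) auto

lemma length_interleave: "length (interleave xs ys) = 2 * min (length xs) (length ys)"
  by (induction xs ys rule: interleave.induct) auto

lemma length_pad_to: "length (pad_to m xs) = max m (length xs)"
  by (simp add: pad_to_def)

lemma length_enc_rat:
  "length (enc_rat r) = 1 + 2 * max (length (nat_bits (nat \<bar>fst (quotient_of r)\<bar>))) (length (nat_bits (nat (snd (quotient_of r)))))"
  by (cases "quotient_of r") (simp add: enc_rat_def Let_def length_interleave length_pad_to)

lemma length_enc_seq: "length (enc_seq ws) = (\<Sum>w\<leftarrow>ws. 2 * length w + 2)"
  by (induction ws) (simp_all add: enc_seq_def len_doubled)

lemma length_enc_vec: "length (enc_vec v) = (\<Sum>r\<leftarrow>v. 2 * length (enc_rat r) + 2)"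
  by (simp add: enc_vec_def length_enc_seq comp_def)

lemma quotient_of_inv_nat:
  assumes "p > 0"
  shows "quotient_of (1 / of_nat p) = (1, int p)"
proof -
  have "1 / (of_nat p :: rat) = Fract 1 (int p)" by (simp add: Fract_of_int_quotient)
  then show ?thesis using assms by (simp add: quotient_of_Fract)
qed

lemma enc_rat_0: "length (enc_rat 0) = 3" by (simp add: length_enc_rat)
lemma enc_rat_1: "length (enc_rat 1) = 3" by (simp add: length_enc_rat)
lemma enc_rat_m1: "length (enc_rat (-1)) = 3" by (simp add: length_enc_rat)
lemma enc_rat_inv:
  "p > 0 \<Longrightarrow> length (enc_rat (1 / of_nat p)) = 1 + 2 * max 1 (length (nat_bits p))"
  by (simp add: length_enc_rat quotient_of_inv_nat)


lemma helper_contra: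
  fixes q :: "nat \<Rightarrow> nat"
  assumes pr: "\<forall>j<n. prime (q j)" and inj: "\<forall>i<n. \<forall>j<n. q i = q j \<longrightarrow> i = j"
    and eq: "(\<Sum>j<n. if a j then (\<Prod>i\<in>{..<n}-{j}. q i) else 0) = (\<Sum>j<n. if b j then (\<Prod>i\<in>{..<n}-{j}. q i) else 0)"
    and k: "k < n" "a k" "\<not> b k"
  shows False
proof -
  define R where "R j = (\<Prod>i\<in>{..<n}-{j}. q i)" for j
  have d: "q k dvd R j" if "j < n" "j \<noteq> k" for j
    unfolding R_def using that k by (intro dvd_prodI) auto
  have "q k dvd (\<Sum>j<n. if b j then R j else 0)"
    using d k by (intro dvd_sum) auto
  moreover have "(\<Sum>j<n. if a j then R j else 0) = (\<Sum>j<n. if b j then R j else 0)" using eq unfolding R_def .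
  ultimately have "q k dvd (\<Sum>j<n. if a j then R j else 0)" by simp
  moreover have "(\<Sum>j<n. if a j then R j else 0) = R k + (\<Sum>j\<in>{..<n}-{k}. if a j then R j else 0)"
    using k by (subst sum.remove[of _ k]) auto
  moreover have "q k dvd (\<Sum>j\<in>{..<n}-{k}. if a j then R j else 0)"
    using d by (intro dvd_sum) auto
  ultimately have "q k dvd R k" by (simp add: dvd_add_left_iff)
  then obtain i where i: "i \<in> {..<n}-{k}" "q k dvd q i"
    unfolding R_def using pr k by (subst (asm) prime_dvd_prod_iff) auto
  then have "q k = q i" using pr k by (intro primes_dvd_imp_eq) auto
  then show False using inj i k by auto
qed

lemma sum_inv_primes_inj:
  fixes q :: "nat \<Rightarrow> nat"
  assumes pr: "\<forall>j<n. prime (q j)" and inj: "\<forall>i<n. \<forall>j<n. q i = q j \<longrightarrow> i = j"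
    and eq: "(\<Sum>j<n. if a j then 1 / of_nat (q j) else 0 :: rat) = (\<Sum>j<n. if b j then 1 / of_nat (q j) else 0)"
  shows "\<forall>j<n. a j = b j"
proof -
  define P where "P = (\<Prod>i<n. q i)"
  define R where "R j = (\<Prod>i\<in>{..<n}-{j}. q i)" for j
  have PR: "(of_nat P :: rat) * (1 / of_nat (q j)) = of_nat (R j)" if "j < n" for j
  proof -
    have "P = q j * R j" unfolding P_def R_def using that by (subst prod.remove[of _ j]) auto
    moreover have "q j > 0" using pr that prime_gt_0_nat by blast
    ultimately show ?thesis by simp
  qed
  have gen: "(of_nat P :: rat) * (\<Sum>j<n. if c j then 1 / of_nat (q j) else 0) = of_nat (\<Sum>j<n. if c j then R j else 0)" for c
    unfolding sum_distrib_left of_nat_sum by (intro sum.cong) (auto simp: PR[symmetric])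
  have "(of_nat (\<Sum>j<n. if a j then R j else 0) :: rat) = of_nat (\<Sum>j<n. if b j then R j else 0)"
    using gen[of a] gen[of b] eq by simp
  then have E: "(\<Sum>j<n. if a j then R j else 0) = (\<Sum>j<n. if b j then R j else 0)" by (simp only: of_nat_eq_iff)
  show ?thesis
  proof (intro allI impI)
    fix k assume k: "k < n"
    show "a k = b k"
    proof (rule ccontr)
      assume "a k \<noteq> b k"
      then consider "a k" "\<not> b k" | "b k" "\<not> a k" by auto
      then show False
      proof cases
        case 1 then show False using helper_contra[OF pr inj, of a b k] E[unfolded R_def] k by simp
      next
        case 2 then show False using helper_contra[OF pr inj, of b a k] E[unfolded R_def] k by simp
      qed
    qed
  qed
qed


definition E :: "bool \<Rightarrow> nat \<Rightarrow> rat list" where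
  "E \<sigma> i = [if \<sigma> then 1 / of_nat (pr i) else 0, if i = 1 then 1 else 0]"

definition Tb :: transformer where
  "Tb = \<lparr>dim = 2, nlayers = 1, nheads = 1, emb = E, score = (\<lambda>l h u v. 0), act = (\<lambda>l v bs. [0,0])\<rparr>"

definition vs0 :: "bool list \<Rightarrow> rat list list" where
  "vs0 w = map (\<lambda>i. E (w!i) (Suc i)) [0..<length w]"

definition hv :: "bool list \<Rightarrow> rat list" where
  "hv w = head_out Tb 0 0 (vs0 w) 0"

definition TL :: "bool list set \<Rightarrow> transformer" where
  "TL L = Tb\<lparr>act := (\<lambda>l v bs. [if (\<exists>w'\<in>L. w' \<noteq> [] \<and> bs = [hv w']) then 1 else -1, 0])\<rparr>"

lemma head_out_TL: "head_out (TL L) = head_out Tb"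
  by (intro ext) (simp add: head_out_def TL_def Tb_def)

lemma foldl_vsum:
  assumes "\<forall>j<n. length (f j) = d"
  shows "foldl (\<lambda>acc j. vadd acc (vscale (c j) (f j))) (replicate d 0) [0..<n]
         = map (\<lambda>k. \<Sum>j<n. c j * (f j ! k)) [0..<d]"
  using assms
proof (induction n)
  case 0
  then show ?case by (simp add: map_replicate_const)
next
  case (Suc n)
  then have IH: "foldl (\<lambda>acc j. vadd acc (vscale (c j) (f j))) (replicate d 0) [0..<n]
         = map (\<lambda>k. \<Sum>j<n. c j * (f j ! k)) [0..<d]" by simp
  have len: "length (f n) = d" using Suc.prems by simp
  have "foldl (\<lambda>acc j. vadd acc (vscale (c j) (f j))) (replicate d 0) [0..<Suc n]
     = vadd (map (\<lambda>k. \<Sum>j<n. c j * (f j ! k)) [0..<d]) (vscale (c n) (f n))"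
    by (simp add: IH)
  also have "\<dots> = map (\<lambda>k. \<Sum>j<Suc n. c j * (f j ! k)) [0..<d]"
    by (intro nth_equalityI) (simp_all add: vadd_def vscale_def len)
  finally show ?case .
qed

lemma saturated_const:
  assumes "n > 0"
  shows "saturated (replicate n (0::rat)) = replicate n (1 / of_nat n)"
  using assms by (simp add: saturated_def Let_def map_replicate_const)

lemma hv_eq:
  assumes "w \<noteq> []"
  shows "hv w = [(\<Sum>j<length w. (1 / of_nat (length w)) * (if w!j then 1 / of_nat (pr (Suc j)) else 0)),
                 1 / of_nat (length w)]"
proof -
  define n where "n = length w"
  have n: "n > 0" using assms by (simp add: n_def)
  have a: "map (\<lambda>j. score Tb 0 0 (vs0 w ! 0) (vs0 w ! j)) [0..<length (vs0 w)] = replicate n 0"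
    by (simp add: Tb_def vs0_def n_def map_replicate_const)
  have len: "\<forall>j<n. length (vs0 w ! j) = 2" by (simp add: vs0_def n_def E_def)
  have "hv w = map (\<lambda>k. \<Sum>j<n. (replicate n (1 / of_nat n) ! j) * (vs0 w ! j ! k)) [0..<2]"
    unfolding hv_def head_out_def Let_def a saturated_const[OF n]
    using foldl_vsum[OF len, of "\<lambda>j. replicate n (1 / of_nat n) ! j"]
    by (simp add: Tb_def vs0_def n_def)
  also have "\<dots> = [(\<Sum>j<n. (1 / of_nat n) * (vs0 w ! j ! 0)), (\<Sum>j<n. (1 / of_nat n) * (vs0 w ! j ! 1))]"
    by (simp add: upt_rec)
  also have "(\<Sum>j<n. (1 / of_nat n) * (vs0 w ! j ! 0)) = (\<Sum>j<n. (1 / of_nat n) * (if w!j then 1 / of_nat (pr (Suc j)) else 0))"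
    by (intro sum.cong) (simp_all add: vs0_def n_def E_def)
  also have "(\<Sum>j<n. (1 / of_nat n) * (vs0 w ! j ! 1)) = (\<Sum>j<n. (if j = 0 then 1 / of_nat n else 0))"
    by (intro sum.cong) (simp_all add: vs0_def n_def E_def)
  also have "\<dots> = 1 / of_nat n" using n by simp
  finally show ?thesis by (simp add: n_def)
qed

lemma hv_inj:
  assumes "w \<noteq> []" "w' \<noteq> []" "hv w = hv w'"
  shows "w = w'"
proof -
  have "(1 / of_nat (length w) :: rat) = 1 / of_nat (length w')"
    using assms hv_eq[of w] hv_eq[of w'] by simp
  then have n: "length w = length w'" by simp
  define n where "n = length w"
  have np: "(of_nat n :: rat) \<noteq> 0" using assms by (simp add: n_def)
  have "(\<Sum>j<n. (1 / of_nat n) * (if w!j then 1 / of_nat (pr (Suc j)) else 0) :: rat)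
      = (\<Sum>j<n. (1 / of_nat n) * (if w'!j then 1 / of_nat (pr (Suc j)) else 0))"
    using assms hv_eq[of w] hv_eq[of w'] n by (simp add: n_def)
  then have "(1 / of_nat n) * (\<Sum>j<n. (if w!j then 1 / of_nat (pr (Suc j)) else 0) :: rat)
      = (1 / of_nat n) * (\<Sum>j<n. (if w'!j then 1 / of_nat (pr (Suc j)) else 0))"
    by (simp add: sum_distrib_left)
  then have S: "(\<Sum>j<n. (if w!j then 1 / of_nat (pr (Suc j)) else 0) :: rat)
      = (\<Sum>j<n. (if w'!j then 1 / of_nat (pr (Suc j)) else 0))"
    using np by simp
  have "\<forall>j<n. (w!j) = (w'!j)"
    by (rule sum_inv_primes_inj[where q = "\<lambda>j. pr (Suc j)", OF _ _ S]) (auto simp: pr_prime dest: pr_inj)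
  then show ?thesis using n by (intro nth_equalityI) (auto simp: n_def)
qed


lemma nheads_TL [simp]: "nheads (TL L) = 1" by (simp add: TL_def Tb_def)
lemma length_vs0 [simp]: "length (vs0 w) = length w" by (simp add: vs0_def)

lemma final_vec_TL:
  assumes "w \<noteq> []"
  shows "final_vec (TL L) w = [if w \<in> L then 1 else -1, 0]"
proof -
  have r: "run (TL L) w = layer (TL L) 0 (vs0 w)"
    by (simp add: run_def TL_def Tb_def vs0_def)
  have "final_vec (TL L) w = act (TL L) 1 (vs0 w ! 0) [head_out (TL L) 0 0 (vs0 w) 0]"
    using assms by (simp add: final_vec_def r layer_def upt_conv_Cons)
  also have "\<dots> = [if (\<exists>w'\<in>L. w' \<noteq> [] \<and> [hv w] = [hv w']) then 1 else -1, 0]"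
    unfolding head_out_TL hv_def[symmetric] by (simp add: TL_def)
  also have "(\<exists>w'\<in>L. w' \<noteq> [] \<and> [hv w] = [hv w']) = (w \<in> L)"
    using assms hv_inj[of w] by auto
  finally show ?thesis .
qed

lemma enc_vec_E_bound:
  "length (enc_vec (E \<sigma> i)) \<le> 24 * length (enc_sym_pos (\<sigma>, i))"
proof -
  define b where "b = length (nat_bits i)"
  have "i < 2^b" unfolding b_def by (rule nat_bits_less)
  then have "pr i < 2^(2*b+2)" by (rule pr_bound)
  then have lb: "length (nat_bits (pr i)) \<le> 2*b+2" by (rule nat_bits_le)
  have pp: "pr i > 0" using pr_prime prime_gt_0_nat by blast
  have r1: "length (enc_rat (if \<sigma> then 1 / of_nat (pr i) else 0)) \<le> 4*b+7"
    using lb pp by (auto simp: enc_rat_inv enc_rat_0)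
  have r2: "length (enc_rat (if i = 1 then 1 else 0)) = 3"
    using enc_rat_0 enc_rat_1 by (cases "i = 1") simp_all
  have "length (enc_vec (E \<sigma> i)) = 2 * length (enc_rat (if \<sigma> then 1 / of_nat (pr i) else 0)) + 2 + (2 * 3 + 2)"
    by (simp add: length_enc_vec E_def enc_rat_0 enc_rat_1)
  also have "\<dots> \<le> 24 * (1 + b)" using r1 by simp
  also have "\<dots> = 24 * length (enc_sym_pos (\<sigma>, i))" by (simp add: enc_sym_pos_def b_def)
  finally show ?thesis .
qed

lemma admissible_TL: "admissible (TL L)"
proof -
  have emb: "size_preserving enc_sym_pos enc_vec (\<lambda>x. emb (TL L) (fst x) (snd x))"
    unfolding size_preserving_def
    by (rule exI[of _ 24], rule exI[of _ 0]) (auto simp: TL_def Tb_def enc_vec_E_bound)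
  have out: "length (enc_vec [if P then 1 else -1, 0 :: rat]) = 16" for P
    by (simp add: length_enc_vec enc_rat_0 enc_rat_1 enc_rat_m1)
  have act: "size_preserving enc_act_in enc_vec (\<lambda>x. act (TL L) l (fst x) (snd x))" for l
    unfolding size_preserving_def
    by (rule exI[of _ 24], rule exI[of _ 1]) (auto simp: TL_def Tb_def out)
  show ?thesis unfolding admissible_def using emb act
    by (simp add: TL_def Tb_def E_def)
qed

lemma recognizes_TL: "recognizes (TL L) L"
  unfolding recognizes_def
proof (intro exI[of _ "[1, 0]"] exI[of _ "if [] \<in> L then 1/2 else -1/2"] conjI allI)
  show "length [1, 0 :: rat] = dim (TL L)" by (simp add: TL_def Tb_def)
  fix w
  show "(0 < dotp [1, 0] (final_vec (TL L) w) + (if [] \<in> L then 1 / 2 else - 1 / 2)) = (w \<in> L)"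
  proof (cases "w = []")
    case True
    then show ?thesis by (simp add: final_vec_def TL_def Tb_def dotp_def numeral_2_eq_2)
  next
    case False
    then show ?thesis by (simp add: final_vec_TL dotp_def)
  qed
qed

theorem proposition1:
  fixes L :: "bool list set"
  shows "\<exists>T. admissible T \<and> recognizes T L"
  using admissible_TL recognizes_TL by blast

end
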